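(* Let $G$ be a group, $E$ a real Banach space, and $f\colon G\to E$ such that $\|f(xy)+f(xy^{-1})-2f(x)\|\le c$ for all $x,y\in G$, for some $c>0$. For $m\in\mathbb{N}$, $m\ge 2$, let $\varphi_m(x)=\lim_{k\to\infty}\frac{1}{m^k}f(x^{m^k})$. Then $\varphi_m\in KJ(G;E)$.
   Context: For such $f$ and $m\ge 2$ the limit defining $\varphi_m(x)$ exists in $E$ for every $x\in G$. $KJ(G;E)$ is the space of functions $g\colon G\to E$ for which there exists a constant $d>0$ with $\|g(xy)+g(xy^{-1})-2g(x)\|\le d$ for all $x,y\in G$. *)

theory Defs
  imports "HOL-Analysis.Analysis" "HOL-Algebra.Group"
begin

definition phi_lim :: "('a, 'c) monoid_scheme \<Rightarrow> ('a \<Rightarrow> 'b::real_normed_vector) \<Rightarrow> nat \<Rightarrow> 'a \<Rightarrow> 'b" where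
  "phi_lim G f m x = lim (\<lambda>k. (1 / real (m ^ k)) *\<^sub>R f (x [^]\<^bsub>G\<^esub> (m ^ k)))"

definition KJ :: "('a, 'c) monoid_scheme \<Rightarrow> ('a \<Rightarrow> 'b::real_normed_vector) set" where
  "KJ G = {g. \<exists>d>0. \<forall>x\<in>carrier G. \<forall>y\<in>carrier G.
      norm (g (x \<otimes>\<^bsub>G\<^esub> y) + g (x \<otimes>\<^bsub>G\<^esub> inv\<^bsub>G\<^esub> y) - 2 *\<^sub>R g x) \<le> d}"

end

theory Submission
  imports Defs
begin

lemma second_diff_bound:
  fixes h :: "nat \<Rightarrow> 'b::real_normed_vector"
  assumes H: "\<And>j. norm (h (Suc (Suc j)) + h j - 2 *\<^sub>R h (Suc j)) \<le> c" and c0: "c \<ge> 0"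
  shows "norm (h j - h 0 - real j *\<^sub>R (h 1 - h 0)) \<le> c * real j ^ 2"
proof -
  have D: "norm ((h (Suc j) - h j) - (h 1 - h 0)) \<le> c * real j" for j
  proof (induction j)
    case 0 then show ?case by simp
  next
    case (Suc j)
    have "(h (Suc (Suc j)) - h (Suc j)) - (h 1 - h 0)
        = ((h (Suc j) - h j) - (h 1 - h 0)) + (h (Suc (Suc j)) + h j - 2 *\<^sub>R h (Suc j))"
      by (simp add: algebra_simps scaleR_2)
    also have "norm \<dots> \<le> c * real j + c"
      by (rule order_trans[OF norm_triangle_ineq add_mono[OF Suc H]])
    finally show ?case by (simp add: algebra_simps)
  qed
  show ?thesis
  proof (induction j)
    case 0 then show ?case by simp
  next
    case (Suc j)
    have "h (Suc j) - h 0 - real (Suc j) *\<^sub>R (h 1 - h 0)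
        = (h j - h 0 - real j *\<^sub>R (h 1 - h 0)) + ((h (Suc j) - h j) - (h 1 - h 0))"
      by (simp add: algebra_simps)
    also have "norm \<dots> \<le> c * real j ^ 2 + c * real j"
      by (rule order_trans[OF norm_triangle_ineq add_mono[OF Suc D]])
    also have "\<dots> \<le> c * real (Suc j) ^ 2"
      using c0 by (simp add: power2_eq_square algebra_simps)
    finally show ?case .
  qed
qed

lemma group_step:
  assumes G: "group G" and a: "a \<in> carrier G"
    and F: "\<forall>x\<in>carrier G. \<forall>y\<in>carrier G.
           norm (f (x \<otimes>\<^bsub>G\<^esub> y) + f (x \<otimes>\<^bsub>G\<^esub> inv\<^bsub>G\<^esub> y) - 2 *\<^sub>R f x) \<le> c"
  shows "norm (f (a [^]\<^bsub>G\<^esub> (Suc (Suc j) * n)) + f (a [^]\<^bsub>G\<^esub> (j * n))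
           - 2 *\<^sub>R f (a [^]\<^bsub>G\<^esub> (Suc j * n))) \<le> (c::real)"
proof -
  interpret group G by (rule G)
  let ?x = "a [^]\<^bsub>G\<^esub> (Suc j * n)" and ?y = "a [^]\<^bsub>G\<^esub> n"
  have xy: "?x \<otimes>\<^bsub>G\<^esub> ?y = a [^]\<^bsub>G\<^esub> (Suc (Suc j) * n)"
    using a by (simp add: nat_pow_mult add.commute)
  have x: "?x = a [^]\<^bsub>G\<^esub> (j * n) \<otimes>\<^bsub>G\<^esub> ?y"
    using a by (simp add: nat_pow_mult add.commute)
  have xiy: "?x \<otimes>\<^bsub>G\<^esub> inv\<^bsub>G\<^esub> ?y = a [^]\<^bsub>G\<^esub> (j * n)"
    unfolding x using a by (simp add: m_assoc)
  show ?thesis using F a xy xiy by (metis nat_pow_closed)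
qed

lemma aux_ineq: "K * (2 * b) \<le> K * a \<Longrightarrow> K * (1 - a) + K * b \<le> K * (1 - (b::real))"
  by (simp add: algebra_simps)

lemma phi_close:
  fixes f :: "'a \<Rightarrow> 'b::banach"
  assumes G: "group G" and a: "a \<in> carrier G"
    and F: "\<forall>x\<in>carrier G. \<forall>y\<in>carrier G.
           norm (f (x \<otimes>\<^bsub>G\<^esub> y) + f (x \<otimes>\<^bsub>G\<^esub> inv\<^bsub>G\<^esub> y) - 2 *\<^sub>R f x) \<le> c"
    and c0: "c \<ge> 0" and m2: "m \<ge> (2::nat)"
  shows "norm (phi_lim G f m a - f a) \<le> c * real m ^ 2 + (real m + 1) * norm (f \<one>\<^bsub>G\<^esub>)"
proof -
  interpret group G by (rule G)
  define K where "K = c * real m ^ 2 + (real m + 1) * norm (f \<one>\<^bsub>G\<^esub>)"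
  have K0: "K \<ge> 0" unfolding K_def using c0 by simp
  have mpos: "real m > 0" using m2 by simp
  have step: "norm ((1 / real m) *\<^sub>R f (a [^]\<^bsub>G\<^esub> (m * n)) - f (a [^]\<^bsub>G\<^esub> n)) \<le> K / real m" for n
  proof -
    have "norm (f (a [^]\<^bsub>G\<^esub> (m * n)) - f (a [^]\<^bsub>G\<^esub> (0 * n)) - real m *\<^sub>R (f (a [^]\<^bsub>G\<^esub> (1 * n)) - f (a [^]\<^bsub>G\<^esub> (0 * n))))
          \<le> c * real m ^ 2"
      by (rule second_diff_bound[where h = "\<lambda>j. f (a [^]\<^bsub>G\<^esub> (j * n))", OF group_step[OF G a F] c0])
    then have A: "norm (f (a [^]\<^bsub>G\<^esub> (m * n)) - f \<one>\<^bsub>G\<^esub> - real m *\<^sub>R (f (a [^]\<^bsub>G\<^esub> n) - f \<one>\<^bsub>G\<^esub>)) \<le> c * real m ^ 2"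
      by simp
    have "f (a [^]\<^bsub>G\<^esub> (m * n)) - real m *\<^sub>R f (a [^]\<^bsub>G\<^esub> n)
        = (f (a [^]\<^bsub>G\<^esub> (m * n)) - f \<one>\<^bsub>G\<^esub> - real m *\<^sub>R (f (a [^]\<^bsub>G\<^esub> n) - f \<one>\<^bsub>G\<^esub>)) + (1 - real m) *\<^sub>R f \<one>\<^bsub>G\<^esub>"
      by (simp add: algebra_simps)
    also have "norm \<dots> \<le> c * real m ^ 2 + \<bar>1 - real m\<bar> * norm (f \<one>\<^bsub>G\<^esub>)"
      using norm_triangle_ineq[of "f (a [^]\<^bsub>G\<^esub> (m * n)) - f \<one>\<^bsub>G\<^esub> - real m *\<^sub>R (f (a [^]\<^bsub>G\<^esub> n) - f \<one>\<^bsub>G\<^esub>)"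
          "(1 - real m) *\<^sub>R f \<one>\<^bsub>G\<^esub>"] A by simp
    also have "\<dots> \<le> K" unfolding K_def using m2 by (simp add: mult_right_mono)
    finally have B: "norm (f (a [^]\<^bsub>G\<^esub> (m * n)) - real m *\<^sub>R f (a [^]\<^bsub>G\<^esub> n)) \<le> K" .
    have "(1 / real m) *\<^sub>R f (a [^]\<^bsub>G\<^esub> (m * n)) - f (a [^]\<^bsub>G\<^esub> n)
        = (1 / real m) *\<^sub>R (f (a [^]\<^bsub>G\<^esub> (m * n)) - real m *\<^sub>R f (a [^]\<^bsub>G\<^esub> n))"
      using mpos by (simp add: algebra_simps)
    then show ?thesis using B mpos by (simp add: divide_right_mono)
  qed
  define u where "u k = (1 / real (m ^ k)) *\<^sub>R f (a [^]\<^bsub>G\<^esub> (m ^ k))" for k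
  have du: "norm (u (Suc k) - u k) \<le> K * (1 / real m) ^ Suc k" for k
  proof -
    have "u (Suc k) - u k = (1 / real m ^ k) *\<^sub>R ((1 / real m) *\<^sub>R f (a [^]\<^bsub>G\<^esub> (m * m ^ k)) - f (a [^]\<^bsub>G\<^esub> (m ^ k)))"
      unfolding u_def by (simp add: algebra_simps)
    then have "norm (u (Suc k) - u k) = (1 / real m ^ k) * norm ((1 / real m) *\<^sub>R f (a [^]\<^bsub>G\<^esub> (m * m ^ k)) - f (a [^]\<^bsub>G\<^esub> (m ^ k)))"
      by simp
    also have "\<dots> \<le> (1 / real m ^ k) * (K / real m)"
      by (rule mult_left_mono[OF step]) simp
    finally show ?thesis by (simp add: power_divide field_simps)
  qed
  have summ: "summable (\<lambda>k. u (Suc k) - u k)"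
  proof (rule summable_comparison_test)
    show "\<exists>N. \<forall>n\<ge>N. norm (u (Suc n) - u n) \<le> K * (1 / real m) ^ Suc n" using du by blast
    have "summable (\<lambda>n. (1 / real m) ^ n)" by (rule summable_geometric) (use m2 in simp)
    then have "summable (\<lambda>n. (1 / real m) ^ Suc n)" by (subst summable_Suc_iff)
    then show "summable (\<lambda>n. K * (1 / real m) ^ Suc n)" by (rule summable_mult)
  qed
  have lim: "u \<longlonglongrightarrow> u 0 + (\<Sum>k. u (Suc k) - u k)"
  proof -
    have "(\<lambda>n. \<Sum>k<n. u (Suc k) - u k) \<longlonglongrightarrow> (\<Sum>k. u (Suc k) - u k)"
      using summable_LIMSEQ[OF summ] .
    then have "(\<lambda>n. u 0 + (\<Sum>k<n. u (Suc k) - u k)) \<longlonglongrightarrow> u 0 + (\<Sum>k. u (Suc k) - u k)"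
      by (intro tendsto_add tendsto_const)
    then show ?thesis by (simp add: sum_lessThan_telescope)
  qed
  have phi: "phi_lim G f m a = u 0 + (\<Sum>k. u (Suc k) - u k)"
    unfolding phi_lim_def u_def[symmetric] using lim by (rule limI)
  have u0: "u 0 = f a" unfolding u_def using a by simp
  have bnd: "norm (u k - u 0) \<le> K * (1 - (1 / real m) ^ k)" for k
  proof (induction k)
    case 0 then show ?case by simp
  next
    case (Suc k)
    have "norm (u (Suc k) - u 0) \<le> norm (u k - u 0) + norm (u (Suc k) - u k)"
      using norm_triangle_ineq[of "u k - u 0" "u (Suc k) - u k"] by simp
    also have "\<dots> \<le> K * (1 - (1 / real m) ^ k) + K * (1 / real m) ^ Suc k"
      using Suc du by (rule add_mono)
    also have "\<dots> \<le> K * (1 - (1 / real m) ^ Suc k)"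
    proof -
      have "2 * (1 / real m) ^ Suc k \<le> (1 / real m) ^ k"
      proof -
        have "2 * (1 / real m) ^ Suc k = (2 / real m) * (1 / real m) ^ k" by simp
        also have "\<dots> \<le> 1 * (1 / real m) ^ k"
          by (rule mult_right_mono) (use m2 in auto)
        finally show ?thesis by simp
      qed
      then have "K * (2 * (1 / real m) ^ Suc k) \<le> K * (1 / real m) ^ k" using K0 by (rule mult_left_mono)
      then show ?thesis by (rule aux_ineq)
    qed
    finally show ?case .
  qed
  have "norm (phi_lim G f m a - f a) \<le> K"
  proof (rule Lim_norm_ubound[of sequentially "\<lambda>k. u k - u 0"])
    show "(\<lambda>k. u k - u 0) \<longlonglongrightarrow> phi_lim G f m a - f a"
      unfolding phi using tendsto_diff[OF lim tendsto_const[of "u 0"]] u0 by simp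
    show "\<forall>\<^sub>F k in sequentially. norm (u k - u 0) \<le> K"
    proof (rule always_eventually, rule allI)
      fix k
      have "(1 / real m) ^ k \<ge> 0" by simp
      then have "K * (1 - (1 / real m) ^ k) \<le> K * 1" using K0 by (intro mult_left_mono) auto
      then show "norm (u k - u 0) \<le> K" using bnd[of k] by linarith
    qed
  qed simp
  then show ?thesis unfolding K_def .
qed

theorem lemma2p5:
  fixes G :: "('a, 'c) monoid_scheme" and f :: "'a \<Rightarrow> 'b::banach" and c :: real and m :: nat
  assumes "group G"
    and "c > 0"
    and "\<forall>x\<in>carrier G. \<forall>y\<in>carrier G.
           norm (f (x \<otimes>\<^bsub>G\<^esub> y) + f (x \<otimes>\<^bsub>G\<^esub> inv\<^bsub>G\<^esub> y) - 2 *\<^sub>R f x) \<le> c"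
    and "m \<ge> 2"
  shows "phi_lim G f m \<in> KJ G"
proof -
  interpret group G by (rule assms(1))
  define B where "B = c * real m ^ 2 + (real m + 1) * norm (f \<one>\<^bsub>G\<^esub>)"
  define P where "P = phi_lim G f m"
  have PB: "norm (P z - f z) \<le> B" if "z \<in> carrier G" for z
    unfolding P_def B_def using phi_close[OF assms(1) that assms(3) _ assms(4)] assms(2) by simp
  have "\<forall>x\<in>carrier G. \<forall>y\<in>carrier G.
      norm (P (x \<otimes>\<^bsub>G\<^esub> y) + P (x \<otimes>\<^bsub>G\<^esub> inv\<^bsub>G\<^esub> y) - 2 *\<^sub>R P x) \<le> c + 4 * B"
  proof (intro ballI)
    fix x y assume x: "x \<in> carrier G" and y: "y \<in> carrier G"
    define p where "p = x \<otimes>\<^bsub>G\<^esub> y"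
    define q where "q = x \<otimes>\<^bsub>G\<^esub> inv\<^bsub>G\<^esub> y"
    have p: "p \<in> carrier G" and q: "q \<in> carrier G" unfolding p_def q_def using x y by auto
    have "P p + P q - 2 *\<^sub>R P x = (f p + f q - 2 *\<^sub>R f x) + (P p - f p) + (P q - f q) - 2 *\<^sub>R (P x - f x)"
      by (simp add: algebra_simps)
    also have "norm \<dots> \<le> norm (f p + f q - 2 *\<^sub>R f x) + norm (P p - f p) + norm (P q - f q) + 2 * norm (P x - f x)"
      proof -
      have n2: "norm (2 *\<^sub>R (P x - f x)) = 2 * norm (P x - f x)" by simp
      show ?thesis
        using norm_triangle_ineq4[of "(f p + f q - 2 *\<^sub>R f x) + (P p - f p) + (P q - f q)" "2 *\<^sub>R (P x - f x)"]
          norm_triangle_ineq[of "(f p + f q - 2 *\<^sub>R f x) + (P p - f p)" "P q - f q"]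
          norm_triangle_ineq[of "f p + f q - 2 *\<^sub>R f x" "P p - f p"] n2
        by linarith
    qed
    also have "\<dots> \<le> c + B + B + 2 * B"
      using assms(3) x y PB[OF p] PB[OF q] PB[OF x] unfolding p_def q_def by (intro add_mono) auto
    finally show "norm (P (x \<otimes>\<^bsub>G\<^esub> y) + P (x \<otimes>\<^bsub>G\<^esub> inv\<^bsub>G\<^esub> y) - 2 *\<^sub>R P x) \<le> c + 4 * B"
      unfolding p_def q_def by simp
  qed
  moreover have "c + 4 * B > 0" unfolding B_def using assms(2) by (simp add: add_pos_nonneg)
  ultimately show ?thesis unfolding KJ_def P_def by blast
qed

end
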